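(* There exists a metric measure space $\mathfrak X=(X,\rho,\mu)$, with $X$ countable and $\mu$ counting measure, such that: (i) for each $p\in(1,\infty)$ there is $C_p<\infty$ with $\|f\|_{*,p}\le C_p\|f\|_{*}$ for all $f\in{\rm BMO}(\mathfrak X)$ (so all ${\rm BMO}^p(\mathfrak X)$ coincide); (ii) there exists $g\in{\rm BMO}(\mathfrak X)$ such that for every $l\in\mathbb N$ there are an open ball $B_l\subset X$ and $\lambda_l>0$ with $\frac{|\{x\in B_l:|g(x)-g_{B_l}|>\lambda_l\}|}{|B_l|}>l\exp(-\lambda_l/l)$; in particular there are no constants $c_1,c_2>0$ with $\frac{|\{x\in B:|f(x)-f_B|>\lambda\}|}{|B|}\le c_1\exp(-c_2\lambda/\|f\|_* )$ for all $f\in{\rm BMO}(\mathfrak X)$, balls $B$ and $\lambda>0$.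
   Context: For locally integrable $f$ and an open ball $B$ with $\mu(B)\in(0,\infty)$, $f_B=\mu(B)^{-1}\int_Bf\,d\mu$; $\|f\|_{*,p}=\sup_B(\mu(B)^{-1}\int_B|f-f_B|^pd\mu)^{1/p}$ over such balls, $\|f\|_*=\|f\|_{*,1}$, and ${\rm BMO}(\mathfrak X)=\{f:\|f\|_*<\infty\}$, ${\rm BMO}^p$ analogously. $|E|$ denotes $\mu(E)$. *)

theory Defs
  imports "HOL-Analysis.Analysis"
begin

text \<open>A metric space structure on a carrier set X (here X is a set of naturals,
  i.e. an arbitrary countable set up to relabelling).  The measure is the counting
  measure on X, so for finite E we have |E| = card E and integrals over a finite
  ball are finite sums.\<close>

definition metric_on :: "'a set \<Rightarrow> ('a \<Rightarrow> 'a \<Rightarrow> real) \<Rightarrow> bool" where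
  "metric_on X \<rho> \<longleftrightarrow>
     (\<forall>x\<in>X. \<forall>y\<in>X. 0 \<le> \<rho> x y \<and> (\<rho> x y = 0 \<longleftrightarrow> x = y) \<and> \<rho> x y = \<rho> y x) \<and>
     (\<forall>x\<in>X. \<forall>y\<in>X. \<forall>z\<in>X. \<rho> x z \<le> \<rho> x y + \<rho> y z)"

definition oball :: "'a set \<Rightarrow> ('a \<Rightarrow> 'a \<Rightarrow> real) \<Rightarrow> 'a \<Rightarrow> real \<Rightarrow> 'a set" where
  "oball X \<rho> x r = {y\<in>X. \<rho> x y < r}"

text \<open>Open balls B with counting measure |B| in (0,\<infinity>), i.e. nonempty finite balls.\<close>
definition adm_balls :: "'a set \<Rightarrow> ('a \<Rightarrow> 'a \<Rightarrow> real) \<Rightarrow> 'a set set" where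
  "adm_balls X \<rho> = {B. (\<exists>x\<in>X. \<exists>r>0. B = oball X \<rho> x r) \<and> B \<noteq> {} \<and> finite B}"

definition avg :: "('a \<Rightarrow> real) \<Rightarrow> 'a set \<Rightarrow> real" where
  "avg f B = (\<Sum>y\<in>B. f y) / real (card B)"

definition bmo_norm :: "'a set \<Rightarrow> ('a \<Rightarrow> 'a \<Rightarrow> real) \<Rightarrow> real \<Rightarrow> ('a \<Rightarrow> real) \<Rightarrow> ereal" where
  "bmo_norm X \<rho> p f =
     (SUP B\<in>adm_balls X \<rho>.
        ereal (((\<Sum>y\<in>B. \<bar>f y - avg f B\<bar> powr p) / real (card B)) powr (1 / p)))"

definition loc_int :: "'a set \<Rightarrow> ('a \<Rightarrow> 'a \<Rightarrow> real) \<Rightarrow> ('a \<Rightarrow> real) \<Rightarrow> bool" where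
  "loc_int X \<rho> f \<longleftrightarrow> (\<forall>x\<in>X. \<forall>r>0. integrable (count_space (oball X \<rho> x r)) f)"

definition BMO :: "'a set \<Rightarrow> ('a \<Rightarrow> 'a \<Rightarrow> real) \<Rightarrow> ('a \<Rightarrow> real) set" where
  "BMO X \<rho> = {f. loc_int X \<rho> f \<and> bmo_norm X \<rho> 1 f < \<infinity>}"

end

theory Submission
  imports Defs "HOL-Library.Nat_Bijection"
begin


definition Lg :: "nat \<Rightarrow> nat" where "Lg n = n^2"
definition Mg :: "nat \<Rightarrow> nat" where "Mg n = 3^n"
definition sz :: "nat \<Rightarrow> nat" where "sz n = Suc (Lg n + Mg n)"
definition gi :: "nat \<Rightarrow> nat" where "gi p = fst (prod_decode p)"
definition pos :: "nat \<Rightarrow> nat" where "pos p = snd (prod_decode p)"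
definition pt :: "nat \<Rightarrow> nat \<Rightarrow> nat" where "pt n k = prod_encode (n,k)"
definition Xs :: "nat set" where "Xs = {p. pos p < sz (gi p)}"
definition adj :: "nat \<Rightarrow> nat \<Rightarrow> nat \<Rightarrow> bool" where
  "adj n k j \<longleftrightarrow> (j = Suc k \<and> j \<le> Lg n) \<or> (k = Suc j \<and> k \<le> Lg n) \<or> (k = 0 \<and> Lg n < j) \<or> (j = 0 \<and> Lg n < k)"
definition dl :: "nat \<Rightarrow> nat \<Rightarrow> nat \<Rightarrow> real" where
  "dl n k j = (if k = j then 0 else if adj n k j then 1 else 2)"
definition lam :: "nat \<Rightarrow> real" where "lam n = real n + 2"
definition cc :: "nat \<Rightarrow> real" where "cc p = dl (gi p) (pos p) 0"
definition rh :: "nat \<Rightarrow> nat \<Rightarrow> real" where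
  "rh p q = (if gi p = gi q then lam (gi p) * dl (gi p) (pos p) (pos q)
             else lam (gi p) * cc p + lam (gi q) * cc q + 1)"
definition hh :: "nat \<Rightarrow> nat \<Rightarrow> real" where "hh n k = (if k \<le> Lg n then real k else 1)"
definition gg :: "nat \<Rightarrow> real" where "gg p = hh (gi p) (pos p)"
definition Gad :: "nat \<Rightarrow> nat set" where "Gad n = {p\<in>Xs. gi p = n}"
definition Nb :: "nat \<Rightarrow> nat set" where
  "Nb x = {y\<in>Xs. gi y = gi x \<and> dl (gi x) (pos x) (pos y) \<le> 1}"

lemma gi_pt[simp]: "gi (pt n k) = n" and pos_pt[simp]: "pos (pt n k) = k"
  by (simp_all add: gi_def pos_def pt_def)
lemma pt_gi_pos[simp]: "pt (gi p) (pos p) = p"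
  by (simp add: gi_def pos_def pt_def)
lemma pt_inj[simp]: "pt n k = pt m j \<longleftrightarrow> n = m \<and> k = j"
  by (metis gi_pt pos_pt)
lemma pt_eqI: "gi p = gi q \<Longrightarrow> pos p = pos q \<Longrightarrow> p = q"
  by (metis pt_gi_pos)

lemma dl_sym: "dl n k j = dl n j k"
  unfolding dl_def adj_def by auto
lemma dl_nonneg: "0 \<le> dl n k j" unfolding dl_def by auto
lemma dl_le2: "dl n k j \<le> 2" unfolding dl_def by auto
lemma dl_zero_iff: "dl n k j = 0 \<longleftrightarrow> k = j" unfolding dl_def by auto
lemma dl_ge1: "k \<noteq> j \<Longrightarrow> 1 \<le> dl n k j" unfolding dl_def by auto
lemma dl_tri: "dl n k j \<le> dl n k i + dl n i j"
proof (cases "k = j")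
  case True then show ?thesis by (simp add: dl_def dl_nonneg)
next
  case False
  show ?thesis
  proof (cases "i = k \<or> i = j")
    case True then show ?thesis using dl_nonneg[of n k i] dl_nonneg[of n i j]
      by (auto simp: dl_def)
  next
    case False
    then show ?thesis using dl_ge1[of i k n] dl_ge1[of k i n] dl_ge1[of i j n] dl_le2[of n k j] by auto
  qed
qed

lemma lam_ge2: "2 \<le> lam n" by (simp add: lam_def)
lemma cc_nonneg: "0 \<le> cc p" by (simp add: cc_def dl_nonneg)

lemma rh_tri: "rh x z \<le> rh x y + rh y z"
proof -
  have l: "\<And>n. 0 \<le> lam n" using lam_ge2 by (metis order_trans zero_le_numeral)
  have cx: "\<And>a b. gi a = gi b \<Longrightarrow> lam (gi a) * cc a \<le> lam (gi a) * dl (gi a) (pos a) (pos b) + lam (gi b) * cc b"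
  proof -
    fix a b assume e: "gi a = gi b"
    have "cc a \<le> dl (gi a) (pos a) (pos b) + cc b" unfolding cc_def using dl_tri e by metis
    then show "?thesis a b" using l[of "gi a"] e by (metis distrib_left mult_left_mono)
  qed
  have same3: "\<And>a b. gi a = gi b \<Longrightarrow> lam (gi a) * dl (gi a) (pos a) (pos b) \<le> lam (gi a) * cc a + lam (gi b) * cc b"
  proof -
    fix a b assume e: "gi a = gi b"
    have "dl (gi a) (pos a) (pos b) \<le> cc a + cc b" unfolding cc_def using dl_tri dl_sym e by metis
    then show "?thesis a b" using l[of "gi a"] e by (metis distrib_left mult_left_mono)
  qed
  show ?thesis
  proof (cases "gi x = gi z")
    case xz: True
    show ?thesis
    proof (cases "gi x = gi y")
      case True
      have "dl (gi x) (pos x) (pos z) \<le> dl (gi x) (pos x) (pos y) + dl (gi x) (pos y) (pos z)" by (rule dl_tri)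
      then have "lam (gi x) * dl (gi x) (pos x) (pos z) \<le> lam (gi x) * dl (gi x) (pos x) (pos y) + lam (gi x) * dl (gi x) (pos y) (pos z)"
        using l[of "gi x"] by (metis distrib_left mult_left_mono)
      then show ?thesis using True xz by (simp add: rh_def)
    next
      case False
      then have "rh x y + rh y z = lam (gi x) * cc x + lam (gi z) * cc z + 2 * lam (gi y) * cc y + 2"
        using xz by (simp add: rh_def)
      moreover have "0 \<le> lam (gi y) * cc y" using l cc_nonneg by simp
      ultimately show ?thesis using same3[OF xz] xz by (simp add: rh_def)
    qed
  next
    case xz: False
    show ?thesis
    proof (cases "gi x = gi y")
      case True
      then have "gi y \<noteq> gi z" using xz by simp
      then show ?thesis using cx[OF True] True xz by (simp add: rh_def)
    next
      case xy: False
      show ?thesis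
      proof (cases "gi y = gi z")
        case True
        have "lam (gi z) * cc z \<le> lam (gi z) * dl (gi z) (pos z) (pos y) + lam (gi y) * cc y"
          using cx[of z y] True by simp
        then show ?thesis using True xz xy dl_sym by (simp add: rh_def)
      next
        case False
        have "0 \<le> lam (gi y) * cc y" using l cc_nonneg by simp
        then show ?thesis using False xz xy by (simp add: rh_def mult.commute)
      qed
    qed
  qed
qed

lemma metric: "metric_on Xs rh"
  unfolding metric_on_def
proof (intro conjI ballI)
  fix x y assume "x \<in> Xs" "y \<in> Xs"
  have l: "\<And>n. 0 < lam n" using lam_ge2 by (metis less_le_trans zero_less_numeral)
  show "0 \<le> rh x y" using l cc_nonneg dl_nonneg
    by (simp add: rh_def add_nonneg_nonneg less_imp_le)
  show "rh x y = 0 \<longleftrightarrow> x = y"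
  proof
    assume "rh x y = 0"
    then show "x = y"
    proof (cases "gi x = gi y")
      case True
      then show ?thesis using \<open>rh x y = 0\<close> l[of "gi x"] by (auto simp: rh_def dl_zero_iff intro: pt_eqI)
    next
      case False
      have "0 \<le> lam (gi x) * cc x" "0 \<le> lam (gi y) * cc y" using l cc_nonneg by (simp_all add: less_imp_le)
      then show ?thesis using False \<open>rh x y = 0\<close> by (simp add: rh_def)
    qed
  qed (simp add: rh_def dl_def)
  show "rh x y = rh y x" by (simp add: rh_def dl_sym)
next
  fix x y z show "rh x z \<le> rh x y + rh y z" by (rule rh_tri)
qed

lemma Gad_eq: "Gad n = pt n ` {..<sz n}"
  unfolding Gad_def Xs_def by (auto, metis image_eqI lessThan_iff pt_gi_pos)
lemma Gad_finite: "finite (Gad n)" by (simp add: Gad_eq)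
lemma Gad_card: "card (Gad n) = sz n"
  unfolding Gad_eq by (subst card_image) (auto simp: inj_on_def)
lemma Gad_ne: "Gad n \<noteq> {}" by (auto simp: Gad_eq sz_def)
lemma pt_in_Xs: "k < sz n \<Longrightarrow> pt n k \<in> Xs" by (simp add: Xs_def)

lemma dl_cases: "dl n k j = 0 \<or> dl n k j = 1 \<or> dl n k j = 2" by (simp add: dl_def)

lemma dl_le1: "dl n k j \<le> 1 \<Longrightarrow> k = j \<or> adj n k j" by (auto simp: dl_def split: if_splits)
lemma adj_pos: "k \<noteq> 0 \<Longrightarrow> adj n k j \<Longrightarrow> j \<in> {0, k - 1, k, Suc k}" by (auto simp: adj_def)
lemma adj_hh: "adj n k j \<Longrightarrow> \<bar>hh n j - hh n k\<bar> \<le> 1" by (auto simp: adj_def hh_def)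

lemma Nb_sub: "pos x \<noteq> 0 \<Longrightarrow> Nb x \<subseteq> pt (gi x) ` {0, pos x - 1, pos x, Suc (pos x)}"
proof
  assume p: "pos x \<noteq> 0"
  fix y assume y: "y \<in> Nb x"
  then have "gi y = gi x" "dl (gi x) (pos x) (pos y) \<le> 1" by (auto simp: Nb_def)
  then have "pos y \<in> {0, pos x - 1, pos x, Suc (pos x)}"
    using dl_le1[of "gi x" "pos x" "pos y"] adj_pos[OF p, of "gi x" "pos y"] by auto
  then show "y \<in> pt (gi x) ` {0, pos x - 1, pos x, Suc (pos x)}"
    using \<open>gi y = gi x\<close> by (metis image_eqI pt_gi_pos)
qed
lemma Nb_finite: "pos x \<noteq> 0 \<Longrightarrow> finite (Nb x)" using Nb_sub finite_subset by blast
lemma Nb_card: "pos x \<noteq> 0 \<Longrightarrow> card (Nb x) \<le> 4"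
proof -
  assume p: "pos x \<noteq> 0"
  have "card (Nb x) \<le> card (pt (gi x) ` {0, pos x - 1, pos x, Suc (pos x)})"
    by (rule card_mono[OF _ Nb_sub[OF p]]) simp
  also have "\<dots> \<le> card {0, pos x - 1, pos x, Suc (pos x)}" by (rule card_image_le) simp
  also have "\<dots> = card (set [0, pos x - 1, pos x, Suc (pos x)])" by simp
  also have "\<dots> \<le> 4" using card_length[of "[0, pos x - 1, pos x, Suc (pos x)]"] by simp
  finally show ?thesis .
qed

lemma hh_Nb: "y \<in> Nb x \<Longrightarrow> \<bar>gg y - gg x\<bar> \<le> 1"
proof -
  assume y: "y \<in> Nb x"
  then have "gi y = gi x" "dl (gi x) (pos x) (pos y) \<le> 1" by (auto simp: Nb_def)
  then have "pos x = pos y \<or> adj (gi x) (pos x) (pos y)" using dl_le1 by blast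
  then show ?thesis using adj_hh \<open>gi y = gi x\<close> unfolding gg_def by auto
qed

lemma lam_pos: "0 < lam n" using lam_ge2[of n] by linarith

lemma oball_big:
  assumes "x \<in> Xs" "r > 1 + lam (gi x) * cc x"
  shows "infinite (oball Xs rh x r)"
proof
  assume fin: "finite (oball Xs rh x r)"
  have "(\<lambda>m. pt m 0) ` {m. m \<noteq> gi x} \<subseteq> oball Xs rh x r"
  proof
    fix y assume "y \<in> (\<lambda>m. pt m 0) ` {m. m \<noteq> gi x}"
    then obtain m where m: "m \<noteq> gi x" "y = pt m 0" by auto
    have "cc y = 0" using m by (simp add: cc_def dl_def)
    then have "rh x y = lam (gi x) * cc x + 1" using m by (simp add: rh_def)
    then show "y \<in> oball Xs rh x r" using assms m by (simp add: oball_def pt_in_Xs sz_def)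
  qed
  moreover have "infinite ((\<lambda>m. pt m 0) ` {m. m \<noteq> gi x})"
  proof
    assume "finite ((\<lambda>m. pt m 0) ` {m. m \<noteq> gi x})"
    then have "finite {m. m \<noteq> gi x}" by (rule finite_imageD) (auto simp: inj_on_def)
    moreover have "infinite {m::nat. m \<noteq> gi x}"
    proof
      assume "finite {m::nat. m \<noteq> gi x}"
      then have "finite (insert (gi x) {m::nat. m \<noteq> gi x})" by simp
      moreover have "insert (gi x) {m::nat. m \<noteq> gi x} = UNIV" by auto
      ultimately show False by simp
    qed
    ultimately show False by simp
  qed
  ultimately show False using fin finite_subset by blast
qed

lemma oball_small:
  assumes "r \<le> 1 + lam (gi x) * cc x"
  shows "oball Xs rh x r = {y \<in> Gad (gi x). lam (gi x) * dl (gi x) (pos x) (pos y) < r}"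
proof -
  have *: "\<And>y. gi y \<noteq> gi x \<Longrightarrow> \<not> rh x y < r"
  proof -
    fix y assume "gi y \<noteq> gi x"
    have "0 \<le> lam (gi y) * cc y" using lam_pos cc_nonneg by (simp add: less_imp_le)
    then show "\<not> rh x y < r" using assms \<open>gi y \<noteq> gi x\<close> by (auto simp: rh_def)
  qed
  show ?thesis
  proof (intro equalityI subsetI)
    fix y assume y: "y \<in> oball Xs rh x r"
    then have "gi y = gi x" using * unfolding oball_def by blast
    then show "y \<in> {y \<in> Gad (gi x). lam (gi x) * dl (gi x) (pos x) (pos y) < r}"
      using y unfolding oball_def Gad_def rh_def by simp
  next
    fix y assume y: "y \<in> {y \<in> Gad (gi x). lam (gi x) * dl (gi x) (pos x) (pos y) < r}"
    then have "gi y = gi x" "y \<in> Xs" unfolding Gad_def by auto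
    then show "y \<in> oball Xs rh x r" using y unfolding oball_def rh_def by simp
  qed
qed

lemma ball_cases:
  assumes "B \<in> adm_balls Xs rh"
  shows "(\<exists>x\<in>Xs. B = {x}) \<or> (\<exists>x\<in>B. pos x \<noteq> 0 \<and> B \<subseteq> Nb x) \<or> (\<exists>n. B = Gad n)"
proof -
  obtain x r where x: "x \<in> Xs" "r > 0" "B = oball Xs rh x r" and fin: "finite B"
    using assms by (auto simp: adm_balls_def)
  let ?n = "gi x"
  have rs: "r \<le> 1 + lam ?n * cc x" using oball_big[OF x(1)] fin x(3) by force
  have B: "B = {y \<in> Gad ?n. lam ?n * dl ?n (pos x) (pos y) < r}"
    using oball_small[OF rs] x(3) by simp
  have xB: "x \<in> B" using B x(1,2) by (simp add: Gad_def dl_def)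
  have lp: "0 < lam ?n" by (rule lam_pos)
  consider "r \<le> lam ?n" | "lam ?n < r" "r \<le> 2 * lam ?n" | "2 * lam ?n < r" by linarith
  then show ?thesis
  proof cases
    case 1
    have "B = {x}"
    proof (intro equalityI subsetI)
      fix y assume "y \<in> B"
      then have "lam ?n * dl ?n (pos x) (pos y) < lam ?n" "gi y = gi x" using 1 B by (auto simp: Gad_def)
      then have "dl ?n (pos x) (pos y) < 1" using lp by simp
      then have "pos x = pos y" using dl_cases[of ?n "pos x" "pos y"] dl_zero_iff by force
      then show "y \<in> {x}" using \<open>gi y = gi x\<close> by (auto intro: pt_eqI)
    qed (use xB in auto)
    then show ?thesis using x(1) by blast
  next
    case 2
    have "pos x \<noteq> 0"
    proof
      assume "pos x = 0"
      then have "cc x = 0" by (simp add: cc_def dl_def)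
      then show False using rs 2 lam_ge2[of ?n] by simp
    qed
    moreover have "B \<subseteq> Nb x"
    proof
      fix y assume "y \<in> B"
      then have "lam ?n * dl ?n (pos x) (pos y) < r" "gi y = gi x" "y \<in> Xs" using B by (auto simp: Gad_def)
      then have "lam ?n * dl ?n (pos x) (pos y) < lam ?n * 2" using 2 by linarith
      then have "dl ?n (pos x) (pos y) < 2" using lp by simp
      then have "dl ?n (pos x) (pos y) \<le> 1" using dl_cases[of ?n "pos x" "pos y"] by force
      then show "y \<in> Nb x" using \<open>gi y = gi x\<close> \<open>y \<in> Xs\<close> by (simp add: Nb_def)
    qed
    ultimately show ?thesis using xB by blast
  next
    case 3
    have "B = Gad ?n"
    proof (intro equalityI subsetI)
      fix y assume "y \<in> Gad ?n"
      have "lam ?n * dl ?n (pos x) (pos y) \<le> lam ?n * 2" using dl_le2 lp by (simp add: less_imp_le)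
      then show "y \<in> B" using 3 B \<open>y \<in> Gad ?n\<close> by auto
    qed (use B in auto)
    then show ?thesis by blast
  qed
qed

lemma Nb_ball:
  assumes "x \<in> Xs" "pos x \<noteq> 0"
  shows "Nb x \<in> adm_balls Xs rh"
proof -
  let ?n = "gi x"
  have c: "1 \<le> cc x" using assms(2) by (simp add: cc_def dl_ge1)
  have "lam ?n * 1 \<le> lam ?n * cc x" using c lam_pos by (simp add: less_imp_le)
  then have rs: "lam ?n + 1/2 \<le> 1 + lam ?n * cc x" by simp
  have "oball Xs rh x (lam ?n + 1/2) = Nb x"
  proof -
    have "\<And>y. gi y = gi x \<Longrightarrow> lam ?n * dl ?n (pos x) (pos y) < lam ?n + 1/2 \<longleftrightarrow> dl ?n (pos x) (pos y) \<le> 1"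
    proof -
      fix y
      have lp: "0 < lam ?n" "2 \<le> lam ?n" using lam_pos lam_ge2 by auto
      show "?thesis y"
        using dl_cases[of ?n "pos x" "pos y"] lp by auto
    qed
    then show ?thesis using oball_small[OF rs] by (auto simp: Nb_def Gad_def)
  qed
  moreover have "x \<in> Nb x" using assms by (simp add: Nb_def dl_def)
  ultimately show ?thesis using assms Nb_finite lam_pos[of ?n] unfolding adm_balls_def
    by (intro CollectI conjI bexI[of _ x] exI[of _ "lam ?n + 1/2"]) (auto simp: add_pos_pos)
qed

lemma Gad_ball:
  assumes "2 \<le> Lg n"
  shows "Gad n \<in> adm_balls Xs rh"
proof -
  let ?x = "pt n 2"
  have xX: "?x \<in> Xs" using assms by (simp add: pt_in_Xs sz_def)
  have c: "cc ?x = 2" using assms by (simp add: cc_def dl_def adj_def)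
  have rs: "2 * lam n + 1/2 \<le> 1 + lam (gi ?x) * cc ?x" using c by simp
  have "oball Xs rh ?x (2 * lam n + 1/2) = Gad n"
  proof -
    have "\<And>y. lam n * dl n 2 (pos y) < 2 * lam n + 1/2"
    proof -
      fix y
      have "lam n * dl n 2 (pos y) \<le> lam n * 2" using dl_le2 lam_pos by (simp add: less_imp_le)
      then show "?thesis y" by simp
    qed
    then show ?thesis using oball_small[OF rs] by auto
  qed
  then show ?thesis using xX Gad_finite Gad_ne lam_pos[of n] unfolding adm_balls_def
    by (intro CollectI conjI bexI[of _ ?x] exI[of _ "2 * lam n + 1/2"]) (auto simp: add_pos_pos)
qed



lemma mean_p_weighted:
  fixes f w :: "nat \<Rightarrow> real"
  assumes fin: "finite B" and ne: "B \<noteq> {}" and p: "0 < p" and D: "0 \<le> D"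
    and w: "\<And>y. y \<in> B \<Longrightarrow> 0 \<le> w y"
    and b: "\<And>y. y \<in> B \<Longrightarrow> \<bar>f y - avg f B\<bar> \<le> D * w y"
  shows "((\<Sum>y\<in>B. \<bar>f y - avg f B\<bar> powr p) / real (card B)) powr (1/p)
         \<le> D * ((\<Sum>y\<in>B. w y powr p) / real (card B)) powr (1/p)"
proof -
  have c: "0 < real (card B)" using fin ne by (simp add: card_gt_0_iff)
  have "(\<Sum>y\<in>B. \<bar>f y - avg f B\<bar> powr p) \<le> (\<Sum>y\<in>B. D powr p * w y powr p)"
  proof (rule sum_mono)
    fix y assume "y \<in> B"
    have "\<bar>f y - avg f B\<bar> powr p \<le> (D * w y) powr p"
      using b[OF \<open>y \<in> B\<close>] p by (intro powr_mono2) auto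
    also have "\<dots> = D powr p * w y powr p" by (rule powr_mult)
    finally show "\<bar>f y - avg f B\<bar> powr p \<le> D powr p * w y powr p" .
  qed
  also have "\<dots> = D powr p * (\<Sum>y\<in>B. w y powr p)" by (simp add: sum_distrib_left)
  finally have "(\<Sum>y\<in>B. \<bar>f y - avg f B\<bar> powr p) / real (card B)
      \<le> D powr p * ((\<Sum>y\<in>B. w y powr p) / real (card B))"
    using c by (simp add: divide_right_mono)
  then have "((\<Sum>y\<in>B. \<bar>f y - avg f B\<bar> powr p) / real (card B)) powr (1/p)
      \<le> (D powr p * ((\<Sum>y\<in>B. w y powr p) / real (card B))) powr (1/p)"
    using p by (intro powr_mono2) (auto intro!: divide_nonneg_pos sum_nonneg c)
  also have "\<dots> = (D powr p) powr (1/p) * ((\<Sum>y\<in>B. w y powr p) / real (card B)) powr (1/p)"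
    by (rule powr_mult)
  also have "(D powr p) powr (1/p) = D" using p D by (simp add: powr_powr)
  finally show ?thesis .
qed

lemma mean_p_const:
  fixes f :: "nat \<Rightarrow> real"
  assumes fin: "finite B" and ne: "B \<noteq> {}" and p: "0 < p" and D: "0 \<le> D"
    and b: "\<And>y. y \<in> B \<Longrightarrow> \<bar>f y - avg f B\<bar> \<le> D"
  shows "((\<Sum>y\<in>B. \<bar>f y - avg f B\<bar> powr p) / real (card B)) powr (1/p) \<le> D"
proof -
  have c: "0 < real (card B)" using fin ne by (simp add: card_gt_0_iff)
  have "((\<Sum>y\<in>B. \<bar>f y - avg f B\<bar> powr p) / real (card B)) powr (1/p)
         \<le> D * ((\<Sum>y\<in>B. (1::real) powr p) / real (card B)) powr (1/p)"
    using mean_p_weighted[OF fin ne p D, of "\<lambda>_. 1" f] b by simp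
  also have "(\<Sum>y\<in>B. (1::real) powr p) / real (card B) = 1" using c by simp
  finally show ?thesis by simp
qed

lemma term1_eq:
  "((\<Sum>y\<in>B. \<bar>f y - avg f B\<bar> powr 1) / real (card B)) powr (1/1) = (\<Sum>y\<in>B. \<bar>f y - avg f B\<bar>) / real (card B)"
  by (simp add: sum_nonneg)

lemma avg_dev:
  fixes f :: "nat \<Rightarrow> real"
  assumes fin: "finite B" and ne: "B \<noteq> {}"
  shows "\<bar>avg f B - c\<bar> \<le> (\<Sum>y\<in>B. \<bar>f y - c\<bar>) / real (card B)"
proof -
  have cB: "0 < real (card B)" using fin ne by (simp add: card_gt_0_iff)
  have "avg f B - c = (\<Sum>y\<in>B. f y - c) / real (card B)"
    using cB by (simp add: avg_def sum_subtractf field_simps)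
  then have "\<bar>avg f B - c\<bar> = \<bar>\<Sum>y\<in>B. f y - c\<bar> / real (card B)" by simp
  also have "\<dots> \<le> (\<Sum>y\<in>B. \<bar>f y - c\<bar>) / real (card B)"
    using cB by (intro divide_right_mono sum_abs) auto
  finally show ?thesis .
qed

lemma avg_dev_const:
  fixes f :: "nat \<Rightarrow> real"
  assumes fin: "finite B" and ne: "B \<noteq> {}" and b: "\<And>y. y \<in> B \<Longrightarrow> \<bar>f y - c\<bar> \<le> w"
  shows "\<bar>avg f B - c\<bar> \<le> w"
proof -
  have cB: "0 < real (card B)" using fin ne by (simp add: card_gt_0_iff)
  have "\<bar>avg f B - c\<bar> \<le> (\<Sum>y\<in>B. \<bar>f y - c\<bar>) / real (card B)" by (rule avg_dev[OF fin ne])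
  also have "\<dots> \<le> (\<Sum>y\<in>B. w) / real (card B)"
    using cB b by (intro divide_right_mono sum_mono) auto
  also have "\<dots> = w" using cB by simp
  finally show ?thesis .
qed

lemma two_le_sum:
  fixes f :: "nat \<Rightarrow> real"
  assumes fin: "finite B" and x: "x \<in> B" and y: "y \<in> B"
  shows "\<bar>f x - f y\<bar> \<le> (\<Sum>z\<in>B. \<bar>f z - avg f B\<bar>)"
proof (cases "x = y")
  case True then show ?thesis by (simp add: sum_nonneg)
next
  case False
  have "\<bar>f x - f y\<bar> \<le> \<bar>f x - avg f B\<bar> + \<bar>f y - avg f B\<bar>" by simp
  also have "\<dots> = (\<Sum>z\<in>{x,y}. \<bar>f z - avg f B\<bar>)" using False by simp
  also have "\<dots> \<le> (\<Sum>z\<in>B. \<bar>f z - avg f B\<bar>)" using x y fin by (intro sum_mono2) auto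
  finally show ?thesis .
qed

lemma poly_exp: "\<exists>C>0. \<forall>n::nat. real (n+1) ^ k \<le> C * 3 ^ n"
proof -
  have "eventually (\<lambda>x::real. x ^ k / exp x < 1) at_top"
    using tendsto_power_div_exp_0[of k] by (rule order_tendstoD) simp
  then obtain x0 where x0: "\<And>x::real. x \<ge> x0 \<Longrightarrow> x ^ k / exp x < 1"
    by (auto simp: eventually_at_top_linorder)
  define C where "C = 3 + \<bar>x0\<bar> ^ k"
  have "\<forall>n::nat. real (n+1) ^ k \<le> C * 3 ^ n"
  proof
    fix n :: nat
    have t: "(1::real) \<le> 3 ^ n" by simp
    show "real (n+1) ^ k \<le> C * 3 ^ n"
    proof (cases "real (n+1) \<ge> x0")
      case True
      then have "real (n+1) ^ k < exp (real (n+1))" using x0[OF True] by simp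
      also have "exp (real (n+1)) = exp 1 * exp (real n)" by (simp add: exp_add[symmetric])
      also have "\<dots> \<le> 3 * 3 ^ n"
      proof (rule mult_mono)
        show "exp 1 \<le> (3::real)" using exp_le by simp
        have "exp (real n) = exp 1 ^ n" by (simp add: exp_of_nat_mult[symmetric])
        also have "\<dots> \<le> 3 ^ n" using exp_le by (intro power_mono) auto
        finally show "exp (real n) \<le> 3 ^ n" .
      qed auto
      also have "\<dots> \<le> C * 3 ^ n" unfolding C_def by (intro mult_right_mono) auto
      finally show ?thesis by simp
    next
      case False
      then have "real (n+1) ^ k \<le> \<bar>x0\<bar> ^ k" by (intro power_mono) auto
      also have "\<dots> \<le> C * 1" unfolding C_def by simp
      also have "\<dots> \<le> C * 3 ^ n" using t unfolding C_def by (intro mult_left_mono) auto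
      finally show ?thesis .
    qed
  qed
  moreover have "C > 0" unfolding C_def by (simp add: add_pos_nonneg)
  ultimately show ?thesis by blast
qed



lemma sum_Gad: "(\<Sum>y\<in>Gad n. F y) = (\<Sum>k<sz n. F (pt n k))"
  unfolding Gad_eq by (subst sum.reindex) (auto simp: inj_on_def)

lemma sz_ge: "(3::real) ^ n \<le> real (sz n)"
  by (simp add: sz_def Mg_def)
lemma sz_pos: "0 < real (sz n)" by (simp add: sz_def)

lemma ratio_bound: "0 \<le> C \<Longrightarrow> a \<le> C * 3 ^ n \<Longrightarrow> a / real (sz n) \<le> C"
proof -
  assume C: "0 \<le> C" and a: "a \<le> C * 3 ^ n"
  have "a \<le> C * real (sz n)" using a C sz_ge[of n] by (meson mult_left_mono order_trans)
  then show ?thesis using sz_pos[of n] by (simp add: divide_le_eq)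
qed

lemma sum_if_le: "(\<Sum>k<sz n. (if k \<le> Lg n then c else 0)) = real (Lg n + 1) * c"
proof -
  have "(\<Sum>k<sz n. (if k \<le> Lg n then c else 0)) = (\<Sum>k\<in>{k\<in>{..<sz n}. k \<le> Lg n}. c)"
    by (rule sum.inter_filter[symmetric]) simp
  also have "{k\<in>{..<sz n}. k \<le> Lg n} = {..Lg n}" by (auto simp: sz_def)
  finally show ?thesis by simp
qed

lemma L_bound: "real (Lg n) + 1 \<le> real (n+1)^2" "real (Lg n) \<le> real (n+1)^2"
  by (simp_all add: Lg_def power2_eq_square algebra_simps)

definition C4 :: real where "C4 = (SOME C. C > 0 \<and> (\<forall>n::nat. real (n+1) ^ 4 \<le> C * 3 ^ n))"
lemma C4: "C4 > 0" "real (n+1) ^ 4 \<le> C4 * 3 ^ n"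
  using someI_ex[OF poly_exp[of 4]] unfolding C4_def by auto

definition H :: real where "H = 1 + C4"
lemma H_ge1: "1 \<le> H" using C4 by (simp add: H_def)

lemma hh_nonneg: "0 \<le> hh n k" by (simp add: hh_def)

lemma avg_hh: "(\<Sum>k<sz n. hh n k) / real (sz n) \<le> H"
proof -
  have "(\<Sum>k<sz n. hh n k) \<le> (\<Sum>k<sz n. 1 + (if k \<le> Lg n then real (Lg n) else 0))"
    by (intro sum_mono) (auto simp: hh_def)
  also have "\<dots> = real (sz n) + real (Lg n + 1) * real (Lg n)"
    by (simp add: sum.distrib sum_if_le)
  finally have s: "(\<Sum>k<sz n. hh n k) \<le> real (sz n) + real (Lg n + 1) * real (Lg n)" .
  have "real (Lg n + 1) * real (Lg n) \<le> real (n+1)^2 * real (n+1)^2"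
    using L_bound[of n] by (intro mult_mono) auto
  also have "\<dots> = real (n+1)^4" by (simp add: power_add[symmetric])
  also have "\<dots> \<le> C4 * 3 ^ n" by (rule C4)
  finally have "real (Lg n + 1) * real (Lg n) / real (sz n) \<le> C4"
    using C4 by (intro ratio_bound) auto
  then have "(real (sz n) + real (Lg n + 1) * real (Lg n)) / real (sz n) \<le> 1 + C4"
    using sz_pos[of n] by (simp add: add_divide_distrib)
  then show ?thesis using s sz_pos[of n] unfolding H_def
    by (meson divide_right_mono less_imp_le order_trans)
qed

lemma Kp: assumes p: "0 < p" shows "\<exists>K. \<forall>n. (\<Sum>k<sz n. (hh n k + H) powr p) / real (sz n) \<le> K"
proof -
  define q where "q = nat \<lceil>p\<rceil>"
  have pq: "p \<le> real q" unfolding q_def by linarith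
  obtain C where C: "C > 0" "\<And>n. real (n+1) ^ (2*q+2) \<le> C * 3 ^ n" using poly_exp by blast
  have H1: "1 \<le> H" by (rule H_ge1)
  have "\<forall>n. (\<Sum>k<sz n. (hh n k + H) powr p) / real (sz n) \<le> (1 + H) powr p + H ^ q * C"
  proof
    fix n
    let ?L = "real (Lg n)"
    have "(\<Sum>k<sz n. (hh n k + H) powr p) \<le> (\<Sum>k<sz n. (1 + H) powr p + (if k \<le> Lg n then (?L + H) powr p else 0))"
    proof (rule sum_mono)
      fix k assume "k \<in> {..<sz n}"
      show "(hh n k + H) powr p \<le> (1 + H) powr p + (if k \<le> Lg n then (?L + H) powr p else 0)"
      proof (cases "k \<le> Lg n")
        case True
        then have "(hh n k + H) powr p \<le> (?L + H) powr p"
          using p H1 by (intro powr_mono2) (auto simp: hh_def)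
        then show ?thesis using True by (simp add: add_increasing)
      next
        case False then show ?thesis by (simp add: hh_def)
      qed
    qed
    also have "\<dots> = real (sz n) * (1 + H) powr p + real (Lg n + 1) * (?L + H) powr p"
      by (simp add: sum.distrib sum_if_le)
    finally have s: "(\<Sum>k<sz n. (hh n k + H) powr p) \<le> real (sz n) * (1 + H) powr p + real (Lg n + 1) * (?L + H) powr p" .
    have b1: "(?L + H) powr p \<le> (?L + H) ^ q"
    proof -
      have "(?L + H) powr p \<le> (?L + H) powr (real q)" using pq H1 by (intro powr_mono) auto
      also have "\<dots> = (?L + H) ^ q" using H1 by (intro powr_realpow) auto
      finally show ?thesis .
    qed
    have b2: "?L + H \<le> H * real (n+1)^2"
    proof -
      have "real (n+1)^2 = ?L + 2 * real n + 1" by (simp add: Lg_def power2_eq_square algebra_simps)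
      then have "H * real (n+1)^2 \<ge> H * (?L + 1)" using H1 by (intro mult_left_mono) auto
      moreover have "H * ?L \<ge> ?L" using H1 mult_right_mono[of 1 H ?L] by simp
      then have "H * (?L + 1) \<ge> ?L + H" by (simp add: algebra_simps)
      ultimately show ?thesis by linarith
    qed
    have "real (Lg n + 1) * (?L + H) powr p \<le> real (n+1)^2 * (H * real (n+1)^2) ^ q"
    proof (rule mult_mono)
      show "real (Lg n + 1) \<le> real (n+1)^2" using L_bound(1)[of n] by simp
      show "(?L + H) powr p \<le> (H * real (n+1)^2) ^ q"
        using b1 b2 H1 by (meson order_trans power_mono add_nonneg_nonneg of_nat_0_le_iff zero_le_one)
    qed auto
    also have "\<dots> = H ^ q * real (n+1) ^ (2*q+2)"
    proof -
      have "\<And>x::real. x^2 * (H*x^2)^q = H^q * x^(2*q+2)"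
      proof -
        fix x :: real
        have "x^(2*q+2) = (x^2)^q * x^2" by (simp only: power_add power_mult)
        then show "x^2 * (H*x^2)^q = H^q * x^(2*q+2)" by (simp add: power_mult_distrib)
      qed
      then show ?thesis .
    qed
    also have "\<dots> \<le> H ^ q * (C * 3 ^ n)" using C H1 by (intro mult_left_mono) auto
    finally have "real (Lg n + 1) * (?L + H) powr p / real (sz n) \<le> H ^ q * C"
      using C H1 by (intro ratio_bound) auto
    then have "(real (sz n) * (1 + H) powr p + real (Lg n + 1) * (?L + H) powr p) / real (sz n) \<le> (1 + H) powr p + H ^ q * C"
      using sz_pos[of n] by (simp add: add_divide_distrib)
    then show "(\<Sum>k<sz n. (hh n k + H) powr p) / real (sz n) \<le> (1 + H) powr p + H ^ q * C"
      using s sz_pos[of n] by (meson divide_right_mono less_imp_le order_trans)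
  qed
  then show ?thesis by blast
qed



definition TT :: "real \<Rightarrow> (nat \<Rightarrow> real) \<Rightarrow> nat set \<Rightarrow> real" where
  "TT p f B = ((\<Sum>y\<in>B. \<bar>f y - avg f B\<bar> powr p) / real (card B)) powr (1/p)"

lemma bmo_TT: "bmo_norm Xs rh p f = (SUP B\<in>adm_balls Xs rh. ereal (TT p f B))"
  by (simp add: bmo_norm_def TT_def)

lemma adm_fin: "B \<in> adm_balls X r \<Longrightarrow> finite B" and adm_ne: "B \<in> adm_balls X r \<Longrightarrow> B \<noteq> {}"
  by (auto simp: adm_balls_def)

lemma TT1: "B \<in> adm_balls Xs rh \<Longrightarrow> TT 1 f B = (\<Sum>y\<in>B. \<bar>f y - avg f B\<bar>) / real (card B)"
  unfolding TT_def by (rule term1_eq)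

lemma adm_Gad2: "Gad 2 \<in> adm_balls Xs rh" by (rule Gad_ball) (simp add: Lg_def)

lemma bmo_real:
  assumes "f \<in> BMO Xs rh"
  shows "\<exists>N\<ge>0. bmo_norm Xs rh 1 f = ereal N \<and> (\<forall>B\<in>adm_balls Xs rh. TT 1 f B \<le> N)"
proof -
  let ?S = "bmo_norm Xs rh 1 f"
  have lt: "?S < \<infinity>" using assms by (simp add: BMO_def)
  have up: "\<And>B. B \<in> adm_balls Xs rh \<Longrightarrow> ereal (TT 1 f B) \<le> ?S"
    unfolding bmo_TT by (rule SUP_upper)
  have "0 \<le> TT 1 f (Gad 2)" by (simp add: TT_def)
  then have ge: "0 \<le> ?S" using up[OF adm_Gad2] by (metis ereal_less_eq(5) order_trans)
  define N where "N = real_of_ereal ?S"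
  have SN: "?S = ereal N" unfolding N_def using lt ge by (cases ?S) auto
  show ?thesis
  proof (intro exI conjI ballI)
    show "0 \<le> N" using ge SN by simp
    show "?S = ereal N" by (rule SN)
    fix B assume "B \<in> adm_balls Xs rh"
    then show "TT 1 f B \<le> N" using up SN by fastforce
  qed
qed

lemma sum_le_N:
  assumes B: "B \<in> adm_balls Xs rh" and T: "TT 1 f B \<le> N"
  shows "(\<Sum>y\<in>B. \<bar>f y - avg f B\<bar>) \<le> real (card B) * N"
proof -
  have c: "0 < real (card B)" using adm_fin[OF B] adm_ne[OF B] by (simp add: card_gt_0_iff)
  have "(\<Sum>y\<in>B. \<bar>f y - avg f B\<bar>) / real (card B) \<le> N" using T TT1[OF B, of f] by simp
  then show ?thesis using c by (simp add: pos_divide_le_eq mult.commute)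
qed

definition par :: "nat \<Rightarrow> nat \<Rightarrow> nat" where "par n k = (if k \<le> Lg n then k - 1 else 0)"

lemma par_props:
  assumes "0 < k" "k < sz n"
  shows "par n k < k" "pt n (par n k) \<in> Nb (pt n k)" "hh n k = hh n (par n k) + 1"
proof -
  show pk: "par n k < k" using assms by (simp add: par_def)
  have "adj n k (par n k)" using assms by (auto simp: par_def adj_def)
  then have "dl n k (par n k) \<le> 1" by (simp add: dl_def)
  moreover have "par n k < sz n" using pk assms(2) by linarith
  ultimately show "pt n (par n k) \<in> Nb (pt n k)" by (simp add: Nb_def pt_in_Xs)
  show "hh n k = hh n (par n k) + 1" using assms by (auto simp: par_def hh_def)
qed

lemma chain:
  assumes N: "\<forall>B\<in>adm_balls Xs rh. TT 1 f B \<le> N" and N0: "0 \<le> N"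
  shows "k < sz n \<Longrightarrow> \<bar>f (pt n k) - f (pt n 0)\<bar> \<le> 4 * N * hh n k"
proof (induction k rule: less_induct)
  case (less k)
  show ?case
  proof (cases "k = 0")
    case True then show ?thesis by (simp add: hh_def)
  next
    case False
    let ?j = "par n k"
    let ?B = "Nb (pt n k)"
    have k0: "0 < k" using False by simp
    note pp = par_props[OF k0 less.prems]
    have pk: "pos (pt n k) \<noteq> 0" using False by simp
    have adm: "?B \<in> adm_balls Xs rh" using Nb_ball[OF pt_in_Xs[OF less.prems] pk] .
    have kB: "pt n k \<in> ?B" using less.prems by (simp add: Nb_def pt_in_Xs dl_def)
    have cB: "0 < real (card ?B)" using adm_fin[OF adm] adm_ne[OF adm] by (simp add: card_gt_0_iff)
    have "\<bar>f (pt n k) - f (pt n ?j)\<bar> \<le> (\<Sum>z\<in>?B. \<bar>f z - avg f ?B\<bar>)"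
      by (rule two_le_sum[OF adm_fin[OF adm] kB pp(2)])
    also have "\<dots> \<le> real (card ?B) * N"
      using N adm by (intro sum_le_N) auto
    also have "\<dots> \<le> 4 * N" using Nb_card[OF pk] N0 by (intro mult_right_mono) auto
    finally have e: "\<bar>f (pt n k) - f (pt n ?j)\<bar> \<le> 4 * N" .
    have "?j < sz n" using pp(1) less.prems by simp
    then have ih: "\<bar>f (pt n ?j) - f (pt n 0)\<bar> \<le> 4 * N * hh n ?j" using less.IH[OF pp(1)] by simp
    have "\<bar>f (pt n k) - f (pt n 0)\<bar> \<le> 4 * N + 4 * N * hh n ?j" using e ih by linarith
    also have "\<dots> = 4 * N * hh n k" using pp(3) by (simp add: algebra_simps)
    finally show ?thesis .
  qed
qed

lemma avg_Gad: "avg F (Gad n) = (\<Sum>k<sz n. F (pt n k)) / real (sz n)"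
  by (simp add: avg_def sum_Gad Gad_card)

lemma Gad_dev:
  assumes N: "\<forall>B\<in>adm_balls Xs rh. TT 1 f B \<le> N" and N0: "0 \<le> N" and y: "y \<in> Gad n"
  shows "\<bar>f y - avg f (Gad n)\<bar> \<le> 4 * N * (gg y + H)"
proof -
  let ?z = "pt n 0"
  have cy: "\<And>y. y \<in> Gad n \<Longrightarrow> \<bar>f y - f ?z\<bar> \<le> 4 * N * gg y"
  proof -
    fix y assume "y \<in> Gad n"
    then have "y = pt n (pos y)" "pos y < sz n" by (auto simp: Gad_def Xs_def)
    then show "\<bar>f y - f ?z\<bar> \<le> 4 * N * gg y" using chain[OF N N0, of "pos y" n]
      by (metis gg_def gi_pt pos_pt)
  qed
  have "\<bar>avg f (Gad n) - f ?z\<bar> \<le> (\<Sum>y\<in>Gad n. \<bar>f y - f ?z\<bar>) / real (card (Gad n))"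
    by (rule avg_dev[OF Gad_finite Gad_ne])
  also have "\<dots> \<le> (\<Sum>y\<in>Gad n. 4 * N * gg y) / real (card (Gad n))"
    using Gad_card sz_pos by (intro divide_right_mono sum_mono cy) auto
  also have "\<dots> = 4 * N * avg gg (Gad n)" by (simp add: avg_def sum_distrib_left)
  also have "\<dots> \<le> 4 * N * H" using N0 avg_hh[of n] by (intro mult_left_mono) (auto simp: avg_Gad gg_def)
  finally have "\<bar>avg f (Gad n) - f ?z\<bar> \<le> 4 * N * H" .
  then show ?thesis using cy[OF y] by (simp add: algebra_simps)
qed

lemma part1:
  assumes p: "1 < p"
  shows "\<exists>C::real. \<forall>f\<in>BMO Xs rh. bmo_norm Xs rh p f \<le> ereal C * bmo_norm Xs rh 1 f"
proof -
  have p0: "0 < p" using p by simp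
  obtain K where K: "\<And>n. (\<Sum>k<sz n. (hh n k + H) powr p) / real (sz n) \<le> K" using Kp[OF p0] by blast
  have K0: "0 \<le> K" using K[of 0] sz_pos[of 0] by (meson divide_nonneg_pos order_trans powr_ge_zero sum_nonneg)
  define C where "C = 4 + 4 * K powr (1/p)"
  have C4: "4 \<le> C" unfolding C_def by simp
  show ?thesis
  proof (intro exI ballI)
    fix f assume f: "f \<in> BMO Xs rh"
    obtain N where N0: "0 \<le> N" and SN: "bmo_norm Xs rh 1 f = ereal N"
      and N: "\<forall>B\<in>adm_balls Xs rh. TT 1 f B \<le> N" using bmo_real[OF f] by blast
    have "\<forall>B\<in>adm_balls Xs rh. TT p f B \<le> C * N"
    proof
      fix B assume B: "B \<in> adm_balls Xs rh"
      note fin = adm_fin[OF B] and ne = adm_ne[OF B]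
      have cB: "0 < real (card B)" using fin ne by (simp add: card_gt_0_iff)
      consider (s) x where "x \<in> Xs" "B = {x}" | (nb) x where "x \<in> B" "pos x \<noteq> 0" "B \<subseteq> Nb x"
        | (g) n where "B = Gad n" using ball_cases[OF B] by blast
      then show "TT p f B \<le> C * N"
      proof cases
        case s
        have "TT p f B \<le> 0" unfolding TT_def
          by (rule mean_p_const[OF fin ne p0]) (auto simp: s avg_def)
        then show ?thesis using C4 N0 by (meson mult_nonneg_nonneg order_trans zero_le_numeral order_trans[OF zero_le_numeral C4])
      next
        case nb
        have "TT p f B \<le> 4 * N" unfolding TT_def
        proof (rule mean_p_const[OF fin ne p0])
          show "0 \<le> 4 * N" using N0 by simp
          fix y assume "y \<in> B"
          have "\<bar>f y - avg f B\<bar> \<le> (\<Sum>z\<in>B. \<bar>f z - avg f B\<bar>)"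
            using \<open>y \<in> B\<close> fin by (intro member_le_sum) auto
          also have "\<dots> \<le> real (card B) * N"
            using N B by (intro sum_le_N) auto
          also have "\<dots> \<le> 4 * N"
          proof -
            have "card B \<le> card (Nb x)" using nb Nb_finite[OF nb(2)] by (intro card_mono)
            then have "card B \<le> 4" using Nb_card[OF nb(2)] by simp
            then show ?thesis using N0 by (intro mult_right_mono) auto
          qed
          finally show "\<bar>f y - avg f B\<bar> \<le> 4 * N" .
        qed
        also have "\<dots> \<le> C * N" using C4 N0 by (intro mult_right_mono) auto
        finally show ?thesis .
      next
        case g
        have "TT p f B \<le> (4 * N) * ((\<Sum>y\<in>B. (gg y + H) powr p) / real (card B)) powr (1/p)"
          unfolding TT_def
        proof (rule mean_p_weighted[OF fin ne p0])
          show "0 \<le> 4 * N" using N0 by simp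
          fix y assume "y \<in> B"
          show "0 \<le> gg y + H" using H_ge1 by (simp add: gg_def hh_nonneg add_nonneg_nonneg)
          show "\<bar>f y - avg f B\<bar> \<le> 4 * N * (gg y + H)" using Gad_dev[OF N N0] \<open>y \<in> B\<close> g by simp
        qed
        also have "(\<Sum>y\<in>B. (gg y + H) powr p) / real (card B) = (\<Sum>k<sz n. (hh n k + H) powr p) / real (sz n)"
          using g by (simp add: sum_Gad Gad_card gg_def)
        also have "(4 * N) * (\<dots>) powr (1/p) \<le> (4 * N) * K powr (1/p)"
          using K[of n] N0 p0 by (intro mult_left_mono powr_mono2) (auto intro!: divide_nonneg_pos sum_nonneg sz_pos)
        also have "\<dots> \<le> C * N" unfolding C_def using N0 by (simp add: algebra_simps)
        finally show ?thesis .
      qed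
    qed
    then have "bmo_norm Xs rh p f \<le> ereal (C * N)" unfolding bmo_TT by (intro SUP_least) simp
    then show "bmo_norm Xs rh p f \<le> ereal C * bmo_norm Xs rh 1 f" using SN by simp
  qed
qed



lemma g_locint: "loc_int Xs rh gg"
  unfolding loc_int_def
proof (intro ballI allI impI)
  fix x r assume x: "x \<in> Xs" and r: "(0::real) < r"
  let ?O = "oball Xs rh x r"
  define F where "F = {y\<in>?O. gg y \<noteq> 0}"
  define R where "R = max (gi x) (nat \<lceil>r\<rceil>)"
  have FO: "F \<subseteq> ?O" unfolding F_def by auto
  have "F \<subseteq> (\<Union>m\<in>{..R}. Gad m)"
  proof
    fix y assume y: "y \<in> F"
    then have yX: "y \<in> Xs" and ry: "rh x y < r" and g0: "gg y \<noteq> 0" by (auto simp: F_def oball_def)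
    have "gi y \<le> R"
    proof (cases "gi y = gi x")
      case True then show ?thesis by (simp add: R_def)
    next
      case False
      have "pos y \<noteq> 0" using g0 by (cases "pos y = 0") (auto simp: gg_def hh_def)
      then have c1: "1 \<le> cc y" by (simp add: cc_def dl_ge1)
      have "lam (gi y) * 1 \<le> lam (gi y) * cc y" using c1 lam_pos by (intro mult_left_mono) (auto simp: less_imp_le)
      moreover have "0 \<le> lam (gi x) * cc x" using lam_pos cc_nonneg by (simp add: less_imp_le)
      ultimately have "lam (gi y) < r" using ry False by (simp add: rh_def)
      then have "real (gi y) < r" by (simp add: lam_def)
      then have "gi y \<le> nat \<lceil>r\<rceil>" by linarith
      then show ?thesis by (simp add: R_def)
    qed
    then show "y \<in> (\<Union>m\<in>{..R}. Gad m)" using yX by (auto simp: Gad_def)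
  qed
  then have finF: "finite F" by (rule finite_subset) (simp add: Gad_finite)
  have I1: "integrable (count_space ?O) (\<lambda>y. \<Sum>a\<in>F. indicator {a} y *\<^sub>R gg a)"
  proof (rule Bochner_Integration.integrable_sum[where f="\<lambda>a y. indicator {a} y *\<^sub>R gg a"])
    fix a assume "a \<in> F"
    then have aO: "a \<in> ?O" using FO by auto
    have "integrable (count_space ?O) (indicator {a} :: nat \<Rightarrow> real)"
      using aO by (intro integrable_real_indicator) (auto simp: emeasure_count_space)
    then show "integrable (count_space ?O) (\<lambda>y. indicator {a} y *\<^sub>R gg a)" by (rule integrable_scaleR_left)
  qed
  moreover have I2: "\<And>y. y \<in> space (count_space ?O) \<Longrightarrow> (\<Sum>a\<in>F. indicator {a} y *\<^sub>R gg a) = gg y"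
  proof -
    fix y assume "y \<in> space (count_space ?O)"
    then have yO: "y \<in> ?O" by simp
    have "(\<Sum>a\<in>F. indicator {a} y *\<^sub>R gg a) = (\<Sum>a\<in>F. if a = y then gg a else 0)"
      by (intro sum.cong) (auto simp: indicator_def)
    also have "\<dots> = (if y \<in> F then gg y else 0)" using finF by (simp add: sum.delta')
    also have "\<dots> = gg y" using yO by (auto simp: F_def)
    finally show "(\<Sum>a\<in>F. indicator {a} y *\<^sub>R gg a) = gg y" .
  qed
  ultimately show "integrable (count_space ?O) gg"
    using Bochner_Integration.integrable_cong[OF refl, of "count_space ?O" "\<lambda>y. \<Sum>a\<in>F. indicator {a} y *\<^sub>R gg a" gg] I1 I2 by blast
qed

lemma gg_nonneg: "0 \<le> gg y" by (simp add: gg_def hh_nonneg)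

lemma avg_gg: "0 \<le> avg gg (Gad n)" "avg gg (Gad n) \<le> H"
  using avg_hh[of n] by (auto simp: avg_Gad gg_def intro!: divide_nonneg_pos sum_nonneg hh_nonneg sz_pos)

lemma g_bound: "\<exists>M. \<forall>B\<in>adm_balls Xs rh. TT 1 gg B \<le> M"
proof -
  obtain K where K: "\<And>n. (\<Sum>k<sz n. (hh n k + H) powr 1) / real (sz n) \<le> K" using Kp[of 1] by auto
  have "\<forall>B\<in>adm_balls Xs rh. TT 1 gg B \<le> max 2 K"
  proof
    fix B assume B: "B \<in> adm_balls Xs rh"
    note fin = adm_fin[OF B] and ne = adm_ne[OF B]
    consider (s) x where "x \<in> Xs" "B = {x}" | (nb) x where "x \<in> B" "pos x \<noteq> 0" "B \<subseteq> Nb x"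
      | (g) n where "B = Gad n" using ball_cases[OF B] by blast
    then show "TT 1 gg B \<le> max 2 K"
    proof cases
      case s
      have "TT 1 gg B \<le> 0" unfolding TT_def
        by (rule mean_p_const[OF fin ne]) (auto simp: s avg_def)
      then show ?thesis by simp
    next
      case nb
      have d: "\<And>y. y \<in> B \<Longrightarrow> \<bar>gg y - gg x\<bar> \<le> 1" using nb hh_Nb by blast
      have a: "\<bar>avg gg B - gg x\<bar> \<le> 1" by (rule avg_dev_const[OF fin ne d])
      have "TT 1 gg B \<le> 2" unfolding TT_def
      proof (rule mean_p_const[OF fin ne])
        fix y assume "y \<in> B" then show "\<bar>gg y - avg gg B\<bar> \<le> 2" using d[of y] a by linarith
      qed auto
      then show ?thesis by simp
    next
      case g
      have "TT 1 gg B \<le> 1 * ((\<Sum>y\<in>B. (gg y + H) powr 1) / real (card B)) powr (1/1)"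
        unfolding TT_def
      proof (rule mean_p_weighted[OF fin ne])
        fix y assume "y \<in> B"
        show "0 \<le> gg y + H" using H_ge1 gg_nonneg[of y] by simp
        show "\<bar>gg y - avg gg B\<bar> \<le> 1 * (gg y + H)" using avg_gg[of n] gg_nonneg[of y] g by auto
      qed auto
      also have "(\<Sum>y\<in>B. (gg y + H) powr 1) / real (card B) = (\<Sum>k<sz n. (hh n k + H) powr 1) / real (sz n)"
        using g by (simp add: sum_Gad Gad_card gg_def)
      also have "1 * (\<dots>) powr (1/1) \<le> K" using K[of n]
        by (simp add: sum_nonneg add_nonneg_nonneg hh_nonneg H_ge1 order_trans[OF zero_le_one H_ge1])
      finally show ?thesis by simp
    qed
  qed
  then show ?thesis by blast
qed

lemma g_BMO: "gg \<in> BMO Xs rh"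
proof -
  obtain M where M: "\<forall>B\<in>adm_balls Xs rh. TT 1 gg B \<le> M" using g_bound by blast
  have "bmo_norm Xs rh 1 gg \<le> ereal M" unfolding bmo_TT using M by (intro SUP_least) simp
  moreover have "ereal M < \<infinity>" by simp
  ultimately have "bmo_norm Xs rh 1 gg < \<infinity>" by (rule order.strict_trans1)
  then show ?thesis using g_locint by (simp add: BMO_def)
qed



lemma n_lt_3pow: "n < (3::nat) ^ n"
  by (induction n) auto

lemma sq_le_3pow: "1 + n^2 \<le> 2 * (3::nat) ^ n"
proof (induction n)
  case 0 then show ?case by simp
next
  case (Suc n)
  have "1 + (Suc n)^2 = 1 + n^2 + 2*n + 1" by (simp add: power2_eq_square)
  also have "\<dots> \<le> 2 * 3^n + 2 * n + 1" using Suc by simp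
  also have "\<dots> \<le> 2 * 3 ^ Suc n" using n_lt_3pow[of n] by simp
  finally show ?case .
qed

lemma sz_le: "real (sz n) \<le> 3 ^ (n+1)"
proof -
  have "sz n \<le> 3 ^ (n+1)" using sq_le_3pow[of n] by (simp add: sz_def Lg_def Mg_def)
  then show ?thesis by (metis of_nat_le_iff of_nat_numeral of_nat_power)
qed

lemma part2:
  assumes l: "(1::nat) \<le> l"
  shows "\<exists>B\<in>adm_balls Xs rh. \<exists>lam::real. lam > 0 \<and>
          real (card {x\<in>B. \<bar>gg x - avg gg B\<bar> > lam}) / real (card B)
            > real l * exp (- lam / real l)"
proof -
  define K where "K = nat \<lceil>H\<rceil> + 2"
  define n where "n = 4 * l + K"
  have KH: "H + 2 \<le> real K" unfolding K_def by linarith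
  have H1: "1 \<le> H" by (rule H_ge1)
  have l1: "1 \<le> real l" using l by simp
  have nr: "real n = 4 * real l + real K" by (simp add: n_def)
  have Ln: "real (Lg n) = real n * real n" by (simp add: Lg_def power2_eq_square)
  have n2: "2 \<le> n" unfolding n_def K_def by simp
  have "2 \<le> Lg n" using n2 unfolding Lg_def by (metis le_trans power2_nat_le_imp_le self_le_power zero_less_numeral numeral_le_iff le_square power2_eq_square) 
  then have adm: "Gad n \<in> adm_balls Xs rh" by (rule Gad_ball)
  define lam where "lam = real (Lg n) - H - 1"
  have nn: "real n \<le> real n * real n" using n2 by (simp add: le_square)
  have lam0: "0 < lam" using nn nr KH l1 unfolding lam_def Ln by linarith
  let ?y = "pt n (Lg n)"
  have yB: "?y \<in> Gad n" by (simp add: Gad_eq sz_def)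
  have gy: "gg ?y = real (Lg n)" by (simp add: gg_def hh_def)
  have "\<bar>gg ?y - avg gg (Gad n)\<bar> > lam" using avg_gg[of n] gy unfolding lam_def by simp
  then have yS: "?y \<in> {x\<in>Gad n. \<bar>gg x - avg gg (Gad n)\<bar> > lam}" using yB by simp
  have "1 \<le> card {x\<in>Gad n. \<bar>gg x - avg gg (Gad n)\<bar> > lam}"
    using yS Gad_finite[of n] by (metis (no_types, lifting) One_nat_def Suc_leI card_gt_0_iff empty_iff finite_subset mem_Collect_eq subsetI)
  then have r1: "1 / real (sz n) \<le> real (card {x\<in>Gad n. \<bar>gg x - avg gg (Gad n)\<bar> > lam}) / real (card (Gad n))"
    using sz_pos[of n] by (simp add: Gad_card divide_right_mono)
  have r2: "1 / 3 ^ (n+1) \<le> 1 / real (sz n)" using sz_le[of n] sz_pos[of n] by (simp add: frac_le)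
  have ar: "real l * real l + 2 * real l * real n + real l < lam"
  proof -
    have a1: "real l \<le> real l * real l" using l1 by (simp add: le_square)
    have a2: "real K \<le> real K * real K" using KH H1 by (simp add: le_square)
    have a3: "0 \<le> real l * real K" by simp
    have eq: "lam - (real l * real l + 2 * real l * real n + real l) = real K * real K + 6 * (real l * real K) + 7 * (real l * real l) - H - 1 - real l"
      unfolding lam_def Ln nr by (simp add: algebra_simps)
    have "H + 1 + real l < real K * real K + 6 * (real l * real K) + 7 * (real l * real l)"
      using a1 a2 a3 KH l1 by linarith
    then show ?thesis using eq by linarith
  qed
  have "ln (real l) + real (n+1) * ln 3 < lam / real l"
  proof -
    have "ln (real l) \<le> real l - 1" using l1 by (intro ln_le_minus_one) simp
    moreover have "ln (3::real) \<le> 2" using ln_le_minus_one[of 3] by simp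
    then have "real (n+1) * ln 3 \<le> real (n+1) * 2" by (intro mult_left_mono) auto
    moreover have "real l + 2 * real n + 1 < lam / real l"
    proof -
      have "(real l + 2 * real n + 1) * real l < lam" using ar by (simp add: algebra_simps)
      then show ?thesis using l1 by (simp add: pos_less_divide_eq)
    qed
    ultimately show ?thesis by simp
  qed
  then have E1: "exp (ln (real l) + real (n+1) * ln 3) < exp (lam / real l)" by (simp only: exp_less_cancel_iff)
  have E2: "exp (ln (real l) + real (n+1) * ln 3) = real l * 3 ^ (n+1)"
  proof -
    have "exp (real (n+1) * ln 3) = exp (ln 3) ^ (n+1)" by (rule exp_of_nat_mult)
    then have "exp (real (n+1) * ln 3) = 3 ^ (n+1)" by simp
    then show ?thesis using l1 by (simp only: exp_add) simp
  qed
  have e: "real l * 3 ^ (n+1) < exp (lam / real l)" using E1 unfolding E2 .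
  have "real l * exp (- lam / real l) < 1 / 3 ^ (n+1)"
  proof -
    have "real l * 3 ^ (n+1) * exp (- lam / real l) < exp (lam / real l) * exp (- lam / real l)"
      using e by (intro mult_strict_right_mono) auto
    also have "\<dots> = 1" by (simp add: exp_add[symmetric])
    finally show ?thesis by (simp add: pos_less_divide_eq mult_ac)
  qed
  then have "real (card {x\<in>Gad n. \<bar>gg x - avg gg (Gad n)\<bar> > lam}) / real (card (Gad n)) > real l * exp (- lam / real l)"
    using r1 r2 by linarith
  then show ?thesis using adm lam0 by blast
qed



lemma g_pos: "0 < real_of_ereal (bmo_norm Xs rh 1 gg)"
proof -
  obtain N where N0: "0 \<le> N" and SN: "bmo_norm Xs rh 1 gg = ereal N"
    and N: "\<forall>B\<in>adm_balls Xs rh. TT 1 gg B \<le> N" using bmo_real[OF g_BMO] by blast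
  obtain B lam where B: "B \<in> adm_balls Xs rh" and lam: "lam > 0"
    and r: "real (card {x\<in>B. \<bar>gg x - avg gg B\<bar> > lam}) / real (card B) > real (1::nat) * exp (- lam / real (1::nat))"
    using part2[of 1] by auto
  have "0 < real (card {x\<in>B. \<bar>gg x - avg gg B\<bar> > lam}) / real (card B)"
    using r by (meson exp_gt_zero less_trans mult_pos_pos of_nat_0_less_iff zero_less_one)
  then have "{x\<in>B. \<bar>gg x - avg gg B\<bar> > lam} \<noteq> {}" by (metis card.empty div_0 less_irrefl of_nat_0)
  then obtain x where x: "x \<in> B" "\<bar>gg x - avg gg B\<bar> > lam" by auto
  have "0 < \<bar>gg x - avg gg B\<bar>" using x lam by linarith
  also have "\<dots> \<le> (\<Sum>y\<in>B. \<bar>gg y - avg gg B\<bar>)" using x adm_fin[OF B] by (intro member_le_sum) auto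
  finally have "0 < (\<Sum>y\<in>B. \<bar>gg y - avg gg B\<bar>) / real (card B)"
    using adm_fin[OF B] adm_ne[OF B] by (simp add: card_gt_0_iff)
  then have "0 < TT 1 gg B" using TT1[OF B] by simp
  then have "0 < N" using N B by fastforce
  then show ?thesis using SN by simp
qed

theorem mainTheorem14:
  shows "\<exists>(X :: nat set) (\<rho> :: nat \<Rightarrow> nat \<Rightarrow> real).
    metric_on X \<rho> \<and>
    (\<forall>p::real. p > 1 \<longrightarrow>
       (\<exists>C::real. \<forall>f\<in>BMO X \<rho>. bmo_norm X \<rho> p f \<le> ereal C * bmo_norm X \<rho> 1 f)) \<and>
    (\<exists>g\<in>BMO X \<rho>. \<forall>l::nat. l \<ge> 1 \<longrightarrow>
       (\<exists>B\<in>adm_balls X \<rho>. \<exists>lam::real. lam > 0 \<and>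
          real (card {x\<in>B. \<bar>g x - avg g B\<bar> > lam}) / real (card B)
            > real l * exp (- lam / real l))) \<and>
    \<not> (\<exists>c1 c2 :: real. c1 > 0 \<and> c2 > 0 \<and>
       (\<forall>f\<in>BMO X \<rho>. \<forall>B\<in>adm_balls X \<rho>. \<forall>lam::real. lam > 0 \<longrightarrow>
          real (card {x\<in>B. \<bar>f x - avg f B\<bar> > lam}) / real (card B)
            \<le> c1 * exp (- c2 * lam / real_of_ereal (bmo_norm X \<rho> 1 f))))"
proof (intro exI conjI)
  show "metric_on Xs rh" by (rule metric)
  show "\<forall>p::real. p > 1 \<longrightarrow> (\<exists>C::real. \<forall>f\<in>BMO Xs rh. bmo_norm Xs rh p f \<le> ereal C * bmo_norm Xs rh 1 f)"
    using part1 by blast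
  show "\<exists>g\<in>BMO Xs rh. \<forall>l::nat. l \<ge> 1 \<longrightarrow>
       (\<exists>B\<in>adm_balls Xs rh. \<exists>lam::real. lam > 0 \<and>
          real (card {x\<in>B. \<bar>g x - avg g B\<bar> > lam}) / real (card B)
            > real l * exp (- lam / real l))"
    using g_BMO part2 by blast
  show "\<not> (\<exists>c1 c2 :: real. c1 > 0 \<and> c2 > 0 \<and>
       (\<forall>f\<in>BMO Xs rh. \<forall>B\<in>adm_balls Xs rh. \<forall>lam::real. lam > 0 \<longrightarrow>
          real (card {x\<in>B. \<bar>f x - avg f B\<bar> > lam}) / real (card B)
            \<le> c1 * exp (- c2 * lam / real_of_ereal (bmo_norm Xs rh 1 f))))"
  proof
    assume "\<exists>c1 c2 :: real. c1 > 0 \<and> c2 > 0 \<and>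
       (\<forall>f\<in>BMO Xs rh. \<forall>B\<in>adm_balls Xs rh. \<forall>lam::real. lam > 0 \<longrightarrow>
          real (card {x\<in>B. \<bar>f x - avg f B\<bar> > lam}) / real (card B)
            \<le> c1 * exp (- c2 * lam / real_of_ereal (bmo_norm Xs rh 1 f)))"
    then obtain c1 c2 :: real where c: "c1 > 0" "c2 > 0" and
      hyp: "\<forall>f\<in>BMO Xs rh. \<forall>B\<in>adm_balls Xs rh. \<forall>lam::real. lam > 0 \<longrightarrow>
          real (card {x\<in>B. \<bar>f x - avg f B\<bar> > lam}) / real (card B)
            \<le> c1 * exp (- c2 * lam / real_of_ereal (bmo_norm Xs rh 1 f))" by blast
    define G where "G = real_of_ereal (bmo_norm Xs rh 1 gg)"
    have G0: "0 < G" unfolding G_def by (rule g_pos)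
    define l where "l = nat (max \<lceil>c1\<rceil> \<lceil>G / c2\<rceil>) + 1"
    have l1: "1 \<le> l" unfolding l_def by simp
    have lc1: "c1 \<le> real l" unfolding l_def by linarith
    have lG: "G / c2 \<le> real l" unfolding l_def by linarith
    obtain B lam where B: "B \<in> adm_balls Xs rh" and lam: "lam > 0"
      and r: "real (card {x\<in>B. \<bar>gg x - avg gg B\<bar> > lam}) / real (card B) > real l * exp (- lam / real l)"
      using part2[OF l1] by auto
    have r2: "real (card {x\<in>B. \<bar>gg x - avg gg B\<bar> > lam}) / real (card B) \<le> c1 * exp (- c2 * lam / G)"
      using hyp g_BMO B lam unfolding G_def by blast
    have lpos: "0 < real l" using l1 by simp
    have "G \<le> c2 * real l" using lG c by (simp add: pos_divide_le_eq mult.commute)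
    then have "lam * G \<le> lam * (c2 * real l)" using lam by (intro mult_left_mono) auto
    then have "lam / real l \<le> c2 * lam / G" using G0 lpos by (simp add: field_simps)
    then have "- c2 * lam / G \<le> - lam / real l" by simp
    then have "exp (- c2 * lam / G) \<le> exp (- lam / real l)" by simp
    then have "c1 * exp (- c2 * lam / G) \<le> real l * exp (- lam / real l)"
      using lc1 c by (intro mult_mono) auto
    then show False using r r2 by linarith
  qed
qed


end
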